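(* Let $v,d\in\mathbb{C}$ with $d\neq0$, $v\neq0$, and let $V(v,d)\subset\mathbb{C}P^2$ be the quartic curve $Xu_0^2-2v(u_2^2+u_1^2)u_2u_0+Xu_2^2=0$, where $X=du_2^2+2vu_1u_2+du_1^2$. If $d\neq\pm2v$, the only singular points of $V(v,d)$ are $[1,0,0]$ and $[0,1,0]$ and $V(v,d)$ is an irreducible quartic curve; moreover, if $d^2\neq v^2$ both singular points are nodes, and if $d^2=v^2$ both are ordinary cusps. If $d=2v$, then $V(v,d)$ is irreducible and has exactly one singular point $[1,-1,1]$ in addition to $[1,0,0],[0,1,0]$, and this point is a node. If $d=-2v$, then $V(v,d)$ is irreducible and has exactly one singular point $[-1,1,1]$ in addition to $[1,0,0],[0,1,0]$, and this point is a node.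
   Context: Coordinates $[u_0,u_1,u_2]$ on $\mathbb{C}P^2$. A singular point of the curve is a point where all partial derivatives of the defining polynomial vanish. *)

theory Defs
  imports "HOL-Analysis.Analysis" "HOL-Computational_Algebra.Polynomial"
begin

text \<open>Homogeneous polynomials in C[u0,u1,u2] are represented as nested univariate
  polynomials: the type complex poly poly poly is ((C[u0])[u1])[u2].
  Points of C^3 (homogeneous coordinates) are vectors complex^3 with components
  x$0, x$1, x$2 standing for u0, u1, u2.\<close>

type_synonym cpoly3 = "complex poly poly poly"

definition cst3 :: "complex \<Rightarrow> cpoly3" where
  "cst3 c = [:[:[:c:]:]:]"

definition U0 :: cpoly3 where "U0 = [:[:[:0, 1:]:]:]"
definition U1 :: cpoly3 where "U1 = [:[:0, 1:]:]"
definition U2 :: cpoly3 where "U2 = [:0, 1:]"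

definition ev3 :: "cpoly3 \<Rightarrow> complex^3 \<Rightarrow> complex" where
  "ev3 F x = poly (poly (poly F [:[:x$2:]:]) [:x$1:]) (x$0)"

definition pd3 :: "3 \<Rightarrow> cpoly3 \<Rightarrow> cpoly3" where
  "pd3 i F = (if i = 0 then map_poly (map_poly pderiv) F
              else if i = 1 then map_poly pderiv F
              else pderiv F)"

definition pt3 :: "complex \<Rightarrow> complex \<Rightarrow> complex \<Rightarrow> complex^3" where
  "pt3 a b c = (\<chi> i. if i = 0 then a else if i = 1 then b else c)"

definition proj_eq :: "complex^3 \<Rightarrow> complex^3 \<Rightarrow> bool" where
  "proj_eq x y \<longleftrightarrow> (\<exists>c. c \<noteq> 0 \<and> x = c *s y)"

definition singular_pt :: "cpoly3 \<Rightarrow> complex^3 \<Rightarrow> bool" where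
  "singular_pt F p \<longleftrightarrow> p \<noteq> 0 \<and> ev3 F p = 0 \<and> (\<forall>i. ev3 (pd3 i F) p = 0)"

text \<open>Quadratic and cubic Taylor terms of F at p: F(p + x) = F(p) + ... + tq F p x + tc F p x + ...\<close>
definition tq :: "cpoly3 \<Rightarrow> complex^3 \<Rightarrow> complex^3 \<Rightarrow> complex" where
  "tq F p x = (1/2) * (\<Sum>i\<in>UNIV. \<Sum>j\<in>UNIV. ev3 (pd3 i (pd3 j F)) p * x$i * x$j)"

definition tc :: "cpoly3 \<Rightarrow> complex^3 \<Rightarrow> complex^3 \<Rightarrow> complex" where
  "tc F p x = (1/6) * (\<Sum>i\<in>UNIV. \<Sum>j\<in>UNIV. \<Sum>k\<in>UNIV.
                 ev3 (pd3 i (pd3 j (pd3 k F))) p * x$i * x$j * x$k)"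

definition linf :: "complex^3 \<Rightarrow> complex^3 \<Rightarrow> complex" where
  "linf l x = (\<Sum>i\<in>UNIV. l$i * x$i)"

text \<open>Node: a singular point whose tangent cone (quadratic Taylor term) is a product
  of two linearly independent linear forms (two distinct tangent lines).\<close>
definition is_node :: "cpoly3 \<Rightarrow> complex^3 \<Rightarrow> bool" where
  "is_node F p \<longleftrightarrow> singular_pt F p \<and>
     (\<exists>l1 l2. (\<forall>a b. a *s l1 + b *s l2 = 0 \<longrightarrow> a = 0 \<and> b = 0) \<and>
              (\<forall>x. tq F p x = linf l1 x * linf l2 x))"

text \<open>Ordinary cusp: a singular point whose tangent cone is a double line l^2 (l nonzero)
  and such that the tangent line meets the curve at p with multiplicity exactly 3,
  i.e. the cubic Taylor term does not vanish identically on the tangent line.\<close>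
definition is_ordinary_cusp :: "cpoly3 \<Rightarrow> complex^3 \<Rightarrow> bool" where
  "is_ordinary_cusp F p \<longleftrightarrow> singular_pt F p \<and>
     (\<exists>l. l \<noteq> 0 \<and> (\<forall>x. tq F p x = (linf l x)^2) \<and>
          (\<exists>w. linf l w = 0 \<and> tc F p w \<noteq> 0))"

definition Xpoly :: "complex \<Rightarrow> complex \<Rightarrow> cpoly3" where
  "Xpoly a b = cst3 b * U2^2 + cst3 (2*a) * U1 * U2 + cst3 b * U1^2"

definition Vpoly :: "complex \<Rightarrow> complex \<Rightarrow> cpoly3" where
  "Vpoly a b = Xpoly a b * U0^2 - cst3 (2*a) * (U2^2 + U1^2) * U2 * U0 + Xpoly a b * U2^2"

end

theory Submission
  imports Defs "HOL-Analysis.Cross3"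
begin


lemma map_poly_add_hom:
  fixes f :: "'a::comm_ring \<Rightarrow> 'b::comm_ring"
  assumes "\<And>a b. f (a + b) = f a + f b"
  shows "map_poly f (p + q) = map_poly f p + map_poly f q"
proof -
  have f0: "f 0 = 0" using assms[of 0 0] by (metis add_cancel_right_right)
  show ?thesis by (intro poly_eqI) (simp add: coeff_map_poly f0 assms)
qed

lemma map_poly_mult_hom:
  fixes f :: "'a::comm_ring \<Rightarrow> 'b::comm_ring"
  assumes "\<And>a b. f (a + b) = f a + f b" "\<And>a b. f (a * b) = f a * f b"
  shows "map_poly f (p * q) = map_poly f p * map_poly f q"
proof -
  have f0: "f 0 = 0" using assms(1)[of 0 0] by (metis add_cancel_right_right)
  show ?thesis
  proof (induction p)
    case 0 then show ?case by simp
  next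
    case (pCons a p)
    show ?case
      by (simp add: map_poly_add_hom[OF assms(1)] map_poly_smult[OF f0 assms(2)] map_poly_pCons[of f, OF f0] pCons(2) f0)
  qed
qed

lemma map_poly_deriv:
  fixes D :: "'a::comm_ring \<Rightarrow> 'a"
  assumes "\<And>a b. D (a + b) = D a + D b" "\<And>a b. D (a * b) = D a * b + a * D b"
  shows "map_poly D (p * q) = map_poly D p * q + p * map_poly D q"
proof -
  have f0: "D 0 = 0" using assms(1)[of 0 0] by (metis add_cancel_right_right)
  show ?thesis
  proof (induction p)
    case 0 then show ?case by simp
  next
    case (pCons a p)
    have sm: "map_poly D (smult a q) = smult (D a) q + smult a (map_poly D q)"
      by (intro poly_eqI) (simp add: coeff_map_poly f0 assms)
    show ?case
      by (simp add: map_poly_add_hom[OF assms(1)] sm map_poly_pCons[of D, OF f0] pCons(2) f0 algebra_simps)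
  qed
qed

lemma D1_add: "map_poly pderiv ((p::complex poly poly) + q) = map_poly pderiv p + map_poly pderiv q"
  by (rule map_poly_add_hom) (simp add: pderiv_add)
lemma D1_mult: "map_poly pderiv ((p::complex poly poly) * q) = map_poly pderiv p * q + p * map_poly pderiv q"
  by (rule map_poly_deriv) (simp_all add: pderiv_add pderiv_mult algebra_simps)

lemma D2_mult: "map_poly pderiv ((p::complex poly poly poly) * q) = map_poly pderiv p * q + p * map_poly pderiv q"
  by (rule map_poly_deriv) (simp_all add: pderiv_add pderiv_mult algebra_simps)

lemma pd3_add: "pd3 i (F + G) = pd3 i F + pd3 i G"
  unfolding pd3_def
  by (simp add: pderiv_add map_poly_add_hom D1_add)

lemma pd3_mult: "pd3 i (F * G) = pd3 i F * G + F * pd3 i G"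
  unfolding pd3_def
  by (simp add: pderiv_mult D2_mult map_poly_deriv[of "map_poly pderiv", OF D1_add D1_mult] algebra_simps)

lemma pd3_diff: "pd3 i (F - G) = pd3 i F - pd3 i G"
  by (metis add_diff_cancel pd3_add diff_add_cancel)

lemma pd3_cst: "pd3 i (cst3 c) = 0"
  unfolding pd3_def cst3_def by (simp add: map_poly_pCons)

lemma pd3_U0: "pd3 i U0 = (if i = 0 then 1 else 0)"
  unfolding pd3_def U0_def by (simp add: map_poly_pCons pderiv_pCons one_pCons)
lemma pd3_U1: "pd3 i U1 = (if i = 1 then 1 else 0)"
  unfolding pd3_def U1_def by (simp add: map_poly_pCons pderiv_pCons one_pCons)
lemma pd3_U2: "pd3 i U2 = (if i = 0 \<or> i = 1 then 0 else 1)"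
  unfolding pd3_def U2_def by (simp add: map_poly_pCons pderiv_pCons one_pCons)

lemma ev3_add: "ev3 (F + G) x = ev3 F x + ev3 G x" by (simp add: ev3_def)
lemma ev3_diff: "ev3 (F - G) x = ev3 F x - ev3 G x" by (simp add: ev3_def)
lemma ev3_mult: "ev3 (F * G) x = ev3 F x * ev3 G x" by (simp add: ev3_def)
lemma ev3_0: "ev3 0 x = 0" by (simp add: ev3_def)
lemma ev3_numeral: "ev3 (numeral n) x = numeral n"
  by (induction n rule: num_induct) (simp_all add: ev3_def numeral_inc)
lemma ev3_1: "ev3 1 x = 1" by (simp add: ev3_def)
lemma ev3_cst: "ev3 (cst3 c) x = c" by (simp add: ev3_def cst3_def)
lemma ev3_U0: "ev3 U0 x = x$0" by (simp add: ev3_def U0_def)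
lemma ev3_U1: "ev3 U1 x = x$1" by (simp add: ev3_def U1_def)
lemma ev3_U2: "ev3 U2 x = x$2" by (simp add: ev3_def U2_def)

lemmas ev3_simps = ev3_add ev3_diff ev3_mult ev3_0 ev3_1 ev3_numeral ev3_cst ev3_U0 ev3_U1 ev3_U2
lemmas pd3_simps = pd3_add pd3_diff pd3_mult pd3_cst pd3_U0 pd3_U1 pd3_U2

lemma Vpoly_alt: "Vpoly a b = Xpoly a b * (U0 * U0) - cst3 (2*a) * (U2 * U2 + U1 * U1) * U2 * U0 + Xpoly a b * (U2 * U2)"
  unfolding Vpoly_def power2_eq_square ..
lemma Xpoly_alt: "Xpoly a b = cst3 b * (U2 * U2) + cst3 (2*a) * U1 * U2 + cst3 b * (U1 * U1)"
  unfolding Xpoly_def power2_eq_square ..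

lemma ev3_V: "ev3 (Vpoly a b) x = (b*x$2^2 + 2*a*x$1*x$2 + b*x$1^2)*(x$0^2+x$2^2) - 2*a*x$0*x$2*(x$1^2+x$2^2)"
  unfolding Vpoly_alt Xpoly_alt by (simp add: ev3_simps) (simp add: algebra_simps power2_eq_square)

lemma ev3_V0: "ev3 (pd3 0 (Vpoly a b)) x = 2*x$0*(b*x$2^2 + 2*a*x$1*x$2 + b*x$1^2) - 2*a*x$2*(x$1^2+x$2^2)"
  unfolding Vpoly_alt Xpoly_alt by (simp add: ev3_simps pd3_simps) (simp add: algebra_simps power2_eq_square)

lemma ev3_V1: "ev3 (pd3 1 (Vpoly a b)) x = (2*b*x$1 + 2*a*x$2)*(x$0^2+x$2^2) - 4*a*x$0*x$1*x$2"
  unfolding Vpoly_alt Xpoly_alt by (simp add: ev3_simps pd3_simps) (simp add: algebra_simps power2_eq_square)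

lemma ev3_V2: "ev3 (pd3 2 (Vpoly a b)) x = (2*a*x$1 + 2*b*x$2)*(x$0^2+x$2^2) + 2*x$2*(b*x$2^2 + 2*a*x$1*x$2 + b*x$1^2) - 2*a*x$0*(x$1^2+3*x$2^2)"
  unfolding Vpoly_alt Xpoly_alt by (simp add: ev3_simps pd3_simps) (simp add: algebra_simps power2_eq_square)

lemma forall3': "(\<forall>i::3. P i) \<longleftrightarrow> P 0 \<and> P 1 \<and> P 2"
proof -
  have "(3::3) = 0" by simp
  then show ?thesis unfolding forall_3 by metis
qed



lemma sing_alg:
  fixes a b c v d :: complex
  assumes d: "d \<noteq> 0" and v: "v \<noteq> 0" and nz: "a \<noteq> 0 \<or> b \<noteq> 0 \<or> c \<noteq> 0"
  and E: "(d*c^2 + 2 * v *b*c + d*b^2)*(a^2+c^2) - 2 * v *a*c*(b^2+c^2) = 0"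
  and E0: "2*a*(d*c^2 + 2 * v *b*c + d*b^2) - 2 * v *c*(b^2+c^2) = 0"
  and E1: "(2*d*b + 2 * v *c)*(a^2+c^2) - 4* v *a*b*c = 0"
  and E2: "(2 * v *b + 2*d*c)*(a^2+c^2) + 2*c*(d*c^2 + 2 * v *b*c + d*b^2) - 2 * v *a*(b^2+3*c^2) = 0"
  shows "(b = 0 \<and> c = 0) \<or> (a = 0 \<and> c = 0) \<or> (d = 2 * v \<and> a = c \<and> b = -c) \<or> (d = -2 * v \<and> a = -c \<and> b = c)"
proof (cases "c = 0")
  case True
  then have "d * b * a^2 = 0" using E1 by (simp add: power2_eq_square)
  then have "a = 0 \<or> b = 0" using d by auto
  then show ?thesis using True by auto
next
  case c: False
  show ?thesis
  proof (cases "a = 0")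
    case True
    have T: "b^2 + c^2 = 0" using E0 True c v by simp
    have "2*c^2*(d * b + v * c) = 0" using E1 True by algebra
    then have e1: "d * b + v * c = 0" using c by simp
    have "2*c^2*(3 * v * b + d * c) = 0" using E2 True T by algebra
    then have e2: "3 * v * b + d * c = 0" using c by simp
    have False using T e1 e2 c v d by algebra
    then show ?thesis ..
  next
    case a: False
    have "v *c*(b^2+c^2)*(c^2-a^2) = 0" using E E0 by algebra
    then have "b^2+c^2 = 0 \<or> c^2 = a^2" using v c by auto
    then show ?thesis
    proof
      assume T: "b^2+c^2 = 0"
      have False using T E0 a c v by algebra
      then show ?thesis ..
    next
      assume "c^2 = a^2"
      then have "a = c \<or> a = -c" by (metis power2_eq_iff)
      then show ?thesis
      proof
        assume ac: "a = c"
        have f1: "4*c^2*((d - v) * b + v * c) = 0" using E1 unfolding ac by algebra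
        have f0: "2*c*((d - v)*(b^2+c^2) + 2 * v * b * c) = 0" using E0 unfolding ac by algebra
        have g1: "(d - v) * b + v * c = 0" using f1 c by simp
        have g0: "(d - v)*(b^2+c^2) + 2 * v * b * c = 0" using f0 c by simp
        have "d*(d - 2 * v)*c^2 = 0" using g0 g1 by algebra
        then have "d - 2 * v = 0" using c d by simp
        then have dd: "d = 2 * v" by algebra
        have "v * (b - (-c)) = 0" using g1 dd by algebra
        then have "b = -c" using v by (simp add: eq_neg_iff_add_eq_0)
        moreover note dd
        ultimately show ?thesis using ac by auto
      next
        assume ac: "a = -c"
        have f1: "4*c^2*((d + v) * b + v * c) = 0" using E1 unfolding ac by algebra
        have f0: "-2*c*((d + v)*(b^2+c^2) + 2 * v * b * c) = 0" using E0 unfolding ac by algebra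
        have g1: "(d + v) * b + v * c = 0" using f1 c by simp
        have g0: "(d + v)*(b^2+c^2) + 2 * v * b * c = 0" using f0 c by simp
        have "d*(d + 2 * v)*c^2 = 0" using g0 g1 by algebra
        then have "d + 2 * v = 0" using c d by simp
        then have dd: "d = -2 * v" by algebra
        have "v * (b - (c)) = 0" using g1 dd by algebra
        then have "b = c" using v by simp
        moreover note dd
        ultimately show ?thesis using ac by auto
      qed
    qed
  qed
qed



lemma proj_eq_iff: "proj_eq p (pt3 a b c) \<longleftrightarrow> (\<exists>k. k \<noteq> 0 \<and> p$0 = k*a \<and> p$1 = k*b \<and> p$2 = k*c)"
  unfolding proj_eq_def vec_eq_iff forall3' pt3_def by simp

lemma vec3_nz: "(p::complex^3) \<noteq> 0 \<longleftrightarrow> p$0 \<noteq> 0 \<or> p$1 \<noteq> 0 \<or> p$2 \<noteq> 0"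
  unfolding vec_eq_iff forall3' by simp

lemma sing_char:
  fixes v d :: complex
  assumes d: "d \<noteq> 0" and v: "v \<noteq> 0"
  shows "singular_pt (Vpoly v d) p \<longleftrightarrow> proj_eq p (pt3 1 0 0) \<or> proj_eq p (pt3 0 1 0) \<or>
     (d = 2 * v \<and> proj_eq p (pt3 1 (-1) 1)) \<or> (d = -2 * v \<and> proj_eq p (pt3 (-1) 1 1))"
proof -
  have sp: "singular_pt (Vpoly v d) p \<longleftrightarrow> (p$0 \<noteq> 0 \<or> p$1 \<noteq> 0 \<or> p$2 \<noteq> 0) \<and>
     (d*p$2^2 + 2 * v * p$1*p$2 + d*p$1^2)*(p$0^2+p$2^2) - 2 * v * p$0*p$2*(p$1^2+p$2^2) = 0 \<and>
     2*p$0*(d*p$2^2 + 2 * v * p$1*p$2 + d*p$1^2) - 2 * v * p$2*(p$1^2+p$2^2) = 0 \<and>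
     (2*d*p$1 + 2 * v * p$2)*(p$0^2+p$2^2) - 4 * v * p$0*p$1*p$2 = 0 \<and>
     (2 * v * p$1 + 2*d*p$2)*(p$0^2+p$2^2) + 2*p$2*(d*p$2^2 + 2 * v * p$1*p$2 + d*p$1^2) - 2 * v * p$0*(p$1^2+3*p$2^2) = 0"
    unfolding singular_pt_def forall3' ev3_V ev3_V0 ev3_V1 ev3_V2 vec3_nz by simp
  show ?thesis
  proof
    assume "singular_pt (Vpoly v d) p"
    then have H: "(p$0 \<noteq> 0 \<or> p$1 \<noteq> 0 \<or> p$2 \<noteq> 0)"
     "(d*p$2^2 + 2 * v * p$1*p$2 + d*p$1^2)*(p$0^2+p$2^2) - 2 * v * p$0*p$2*(p$1^2+p$2^2) = 0"
     "2*p$0*(d*p$2^2 + 2 * v * p$1*p$2 + d*p$1^2) - 2 * v * p$2*(p$1^2+p$2^2) = 0"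
     "(2*d*p$1 + 2 * v * p$2)*(p$0^2+p$2^2) - 4 * v * p$0*p$1*p$2 = 0"
     "(2 * v * p$1 + 2*d*p$2)*(p$0^2+p$2^2) + 2*p$2*(d*p$2^2 + 2 * v * p$1*p$2 + d*p$1^2) - 2 * v * p$0*(p$1^2+3*p$2^2) = 0"
      using sp by blast+
    have "(p$1 = 0 \<and> p$2 = 0) \<or> (p$0 = 0 \<and> p$2 = 0) \<or> (d = 2 * v \<and> p$0 = p$2 \<and> p$1 = - p$2) \<or> (d = -2 * v \<and> p$0 = - p$2 \<and> p$1 = p$2)"
      by (rule sing_alg[OF d v H(1)]) (use H in \<open>simp_all add: algebra_simps\<close>)
    then show "proj_eq p (pt3 1 0 0) \<or> proj_eq p (pt3 0 1 0) \<or>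
     (d = 2 * v \<and> proj_eq p (pt3 1 (-1) 1)) \<or> (d = -2 * v \<and> proj_eq p (pt3 (-1) 1 1))"
    proof (elim disjE conjE)
      assume "p$1 = 0" "p$2 = 0"
      then have "proj_eq p (pt3 1 0 0)" unfolding proj_eq_iff using H(1) by (intro exI[of _ "p$0"]) auto
      then show ?thesis by blast
    next
      assume "p$0 = 0" "p$2 = 0"
      then have "proj_eq p (pt3 0 1 0)" unfolding proj_eq_iff using H(1) by (intro exI[of _ "p$1"]) auto
      then show ?thesis by blast
    next
      assume "d = 2 * v" "p$0 = p$2" "p$1 = - p$2"
      moreover then have "proj_eq p (pt3 1 (-1) 1)" unfolding proj_eq_iff using H(1) by (intro exI[of _ "p$2"]) auto
      ultimately show ?thesis by blast
    next
      assume "d = -2 * v" "p$0 = - p$2" "p$1 = p$2"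
      moreover then have "proj_eq p (pt3 (-1) 1 1)" unfolding proj_eq_iff using H(1) by (intro exI[of _ "p$2"]) auto
      ultimately show ?thesis by blast
    qed
  next
    assume "proj_eq p (pt3 1 0 0) \<or> proj_eq p (pt3 0 1 0) \<or>
     (d = 2 * v \<and> proj_eq p (pt3 1 (-1) 1)) \<or> (d = -2 * v \<and> proj_eq p (pt3 (-1) 1 1))"
    then show "singular_pt (Vpoly v d) p"
      unfolding sp proj_eq_iff
      by (elim disjE exE conjE) (simp_all add: algebra_simps power2_eq_square)
  qed
qed



lemma sum3': "sum f (UNIV::3 set) = f 0 + f 1 + f 2"
proof -
  have "(3::3) = 0" by simp
  then show ?thesis unfolding sum_3 by (metis add.commute add.left_commute)
qed

lemma cst3_add: "cst3 (a + b) = cst3 a + cst3 b" by (simp add: cst3_def)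
lemma cst3_1: "cst3 1 = 1" by (simp add: cst3_def one_pCons)

lemma cst3_numeral: "(numeral n :: cpoly3) = cst3 (numeral n)"
proof (induction n rule: num_induct)
  case One then show ?case by (simp add: cst3_1)
next
  case (inc n)
  then show ?case by (metis cst3_1 cst3_add numeral_inc)
qed

lemma pd3_numeral: "pd3 i (numeral n) = 0"
  by (simp only: cst3_numeral pd3_cst)

lemmas pd3_simps' = pd3_simps pd3_numeral

lemma pt3_nth: "pt3 a b c $ 0 = a" "pt3 a b c $ 1 = b" "pt3 a b c $ 2 = c"
  by (simp_all add: pt3_def)

lemma tq_100: "tq (Vpoly v d) (pt3 1 0 0) x = d*x$1^2 + 2 * v * x$1*x$2 + d*x$2^2"
  unfolding tq_def sum3' Vpoly_alt Xpoly_alt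
  by (simp add: ev3_simps pd3_simps' pt3_nth) (simp add: algebra_simps power2_eq_square)

lemma tq_010: "tq (Vpoly v d) (pt3 0 1 0) x = d*x$0^2 - 2 * v * x$0*x$2 + d*x$2^2"
  unfolding tq_def sum3' Vpoly_alt Xpoly_alt
  by (simp add: ev3_simps pd3_simps' pt3_nth) (simp add: algebra_simps power2_eq_square)

lemma tq_p: "tq (Vpoly v (2 * v)) (pt3 1 (-1) 1) x = 2 * v * ((x$0 - x$2)^2 + (x$1 + x$2)^2)"
  unfolding tq_def sum3' Vpoly_alt Xpoly_alt
  by (simp add: ev3_simps pd3_simps' pt3_nth) (simp add: algebra_simps power2_eq_square)

lemma tq_m: "tq (Vpoly v (-2 * v)) (pt3 (-1) 1 1) x = -2 * v * ((x$0 + x$2)^2 + (x$1 - x$2)^2)"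
  unfolding tq_def sum3' Vpoly_alt Xpoly_alt
  by (simp add: ev3_simps pd3_simps' pt3_nth) (simp add: algebra_simps power2_eq_square)

lemma tc_100: "tc (Vpoly v d) (pt3 1 0 0) x = 2*x$0*(d*x$1^2 + 2 * v * x$1*x$2 + d*x$2^2) - 2 * v * x$2*(x$1^2+x$2^2)"
  unfolding tc_def sum3' Vpoly_alt Xpoly_alt
  by (simp add: ev3_simps pd3_simps' pt3_nth) (simp add: algebra_simps power2_eq_square power3_eq_cube)

lemma tc_010: "tc (Vpoly v d) (pt3 0 1 0) x = (2*d*x$1 + 2 * v * x$2)*(x$0^2+x$2^2) - 4 * v * x$0*x$1*x$2"
  unfolding tc_def sum3' Vpoly_alt Xpoly_alt
  by (simp add: ev3_simps pd3_simps' pt3_nth) (simp add: algebra_simps power2_eq_square power3_eq_cube)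



lemma linf3: "linf l x = l$0 * x$0 + l$1 * x$1 + l$2 * x$2"
  unfolding linf_def sum3' ..

lemma sq_aux: fixes r q d v y z :: complex
  assumes "r^2 = d" "q*d = v" "q^2 = 1"
  shows "d*y^2 + 2 * v * y*z + d*z^2 = (r*y + r*q*z)^2"
proof -
  have "r^2 - d = 0" "q*d - v = 0" "q^2 - 1 = 0" using assms by simp_all
  then show ?thesis by algebra
qed

lemma node_100:
  fixes v d :: complex
  assumes d: "d \<noteq> 0" and v: "v \<noteq> 0" and dv: "d^2 \<noteq> v^2"
  shows "is_node (Vpoly v d) (pt3 1 0 0)"
proof -
  define s where "s = csqrt (v^2 - d^2)"
  have s2: "s^2 = v^2 - d^2" unfolding s_def by simp
  have s0: "s \<noteq> 0" using s2 dv by auto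
  have sing: "singular_pt (Vpoly v d) (pt3 1 0 0)" using sing_char[OF d v] proj_eq_iff by (auto simp: pt3_nth)
  show ?thesis unfolding is_node_def
  proof (rule conjI[OF sing], rule exI[of _ "pt3 0 d (v+s)"], rule exI[of _ "pt3 0 1 ((v-s)/d)"], rule conjI, intro allI impI)
    fix a b :: complex
    assume "a *s pt3 0 d (v + s) + b *s pt3 0 1 ((v - s) / d) = 0"
    then have e: "a * d + b = 0" "a * (v+s) + b * ((v-s)/d) = 0" unfolding vec_eq_iff forall3' by (simp_all add: pt3_nth)
    have "2 * a * s = 0" using e d by (simp add: field_simps) algebra
    then have "a = 0" using s0 by simp
    moreover have "b = 0" using e(1) \<open>a = 0\<close> by simp
    ultimately show "a = 0 \<and> b = 0" by simp
  next
    show "\<forall>x. tq (Vpoly v d) (pt3 1 0 0) x = linf (pt3 0 d (v + s)) x * linf (pt3 0 1 ((v - s) / d)) x"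
    proof
      fix x :: "complex^3"
      show "tq (Vpoly v d) (pt3 1 0 0) x = linf (pt3 0 d (v + s)) x * linf (pt3 0 1 ((v - s) / d)) x"
        unfolding tq_100 linf3 pt3_nth using d s2 by (simp add: field_simps) algebra
    qed
  qed
qed

lemma node_010:
  fixes v d :: complex
  assumes d: "d \<noteq> 0" and v: "v \<noteq> 0" and dv: "d^2 \<noteq> v^2"
  shows "is_node (Vpoly v d) (pt3 0 1 0)"
proof -
  define s where "s = csqrt (v^2 - d^2)"
  have s2: "s^2 = v^2 - d^2" unfolding s_def by simp
  have s0: "s \<noteq> 0" using s2 dv by auto
  have sing: "singular_pt (Vpoly v d) (pt3 0 1 0)" using sing_char[OF d v] proj_eq_iff by (auto simp: pt3_nth)
  show ?thesis unfolding is_node_def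
  proof (rule conjI[OF sing], rule exI[of _ "pt3 d 0 (s-v)"], rule exI[of _ "pt3 1 0 ((-v-s)/d)"], rule conjI, intro allI impI)
    fix a b :: complex
    assume "a *s pt3 d 0 (s-v) + b *s pt3 1 0 ((-v-s)/d) = 0"
    then have e: "a * d + b = 0" "a * (s-v) + b * ((-v-s)/d) = 0" unfolding vec_eq_iff forall3' by (simp_all add: pt3_nth)
    have "2 * a * s = 0" using e d by (simp add: field_simps) algebra
    then have "a = 0" using s0 by simp
    moreover have "b = 0" using e(1) \<open>a = 0\<close> by simp
    ultimately show "a = 0 \<and> b = 0" by simp
  next
    show "\<forall>x. tq (Vpoly v d) (pt3 0 1 0) x = linf (pt3 d 0 (s-v)) x * linf (pt3 1 0 ((-v-s)/d)) x"
    proof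
      fix x :: "complex^3"
      show "tq (Vpoly v d) (pt3 0 1 0) x = linf (pt3 d 0 (s-v)) x * linf (pt3 1 0 ((-v-s)/d)) x"
        unfolding tq_010 linf3 pt3_nth using d s2 by (simp add: field_simps) algebra
    qed
  qed
qed

lemma node_p:
  fixes v :: complex
  assumes v: "v \<noteq> 0"
  shows "is_node (Vpoly v (2 * v)) (pt3 1 (-1) 1)"
proof -
  have d: "2 * v \<noteq> 0" using v by simp
  have sing: "singular_pt (Vpoly v (2 * v)) (pt3 1 (-1) 1)" using sing_char[OF d v] proj_eq_iff by (auto simp: pt3_nth)
  show ?thesis unfolding is_node_def
  proof (rule conjI[OF sing], rule exI[of _ "pt3 (2 * v) (2 * v * \<i>) (2 * v * (-1 + \<i>))"], rule exI[of _ "pt3 1 (-\<i>) (-1-\<i>)"], rule conjI, intro allI impI)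
    fix a b :: complex
    assume "a *s pt3 (2 * v) (2 * v * \<i>) (2 * v * (-1 + \<i>)) + b *s pt3 1 (-\<i>) (-1-\<i>) = 0"
    then have c: "\<forall>i. (a *s pt3 (2 * v) (2 * v * \<i>) (2 * v * (-1 + \<i>)) + b *s pt3 1 (-\<i>) (-1-\<i>))$i = 0" by simp
    have e1: "a * (2 * v) + b = 0" using c[rule_format, of 0] by (simp add: pt3_nth)
    have e2: "a * (2 * v) = b" using c[rule_format, of 1] by (simp add: pt3_nth)
    note e = e1 e2
    have ii: "\<i> * \<i> = -1" by simp
    have "4 * v * a = 0" using e ii by algebra
    then have "a = 0" using v by simp
    moreover have "b = 0" using e(1) \<open>a = 0\<close> by simp
    ultimately show "a = 0 \<and> b = 0" by simp
  next
    show "\<forall>x. tq (Vpoly v (2 * v)) (pt3 1 (-1) 1) x = linf (pt3 (2 * v) (2 * v * \<i>) (2 * v * (-1 + \<i>))) x * linf (pt3 1 (-\<i>) (-1-\<i>)) x"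
    proof
      fix x :: "complex^3"
      show "tq (Vpoly v (2 * v)) (pt3 1 (-1) 1) x = linf (pt3 (2 * v) (2 * v * \<i>) (2 * v * (-1 + \<i>))) x * linf (pt3 1 (-\<i>) (-1-\<i>)) x"
        unfolding tq_p linf3 pt3_nth by (simp add: algebra_simps power2_eq_square)
    qed
  qed
qed

lemma node_m:
  fixes v :: complex
  assumes v: "v \<noteq> 0"
  shows "is_node (Vpoly v (-2 * v)) (pt3 (-1) 1 1)"
proof -
  have d: "-2 * v \<noteq> 0" using v by simp
  have sing: "singular_pt (Vpoly v (-2 * v)) (pt3 (-1) 1 1)" using sing_char[OF d v] proj_eq_iff by (auto simp: pt3_nth)
  show ?thesis unfolding is_node_def
  proof (rule conjI[OF sing], rule exI[of _ "pt3 (-2 * v) (-2 * v * \<i>) (-2 * v * (1 - \<i>))"], rule exI[of _ "pt3 1 (-\<i>) (1+\<i>)"], rule conjI, intro allI impI)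
    fix a b :: complex
    assume "a *s pt3 (-2 * v) (-2 * v * \<i>) (-2 * v * (1 - \<i>)) + b *s pt3 1 (-\<i>) (1+\<i>) = 0"
    then have e: "a * (-2 * v) + b = 0" "a * (-2 * v * \<i>) + b * (-\<i>) = 0" unfolding vec_eq_iff forall3' by (simp_all add: pt3_nth)
    have ii: "\<i> * \<i> = -1" by simp
    have "4 * v * a = 0" using e ii by algebra
    then have "a = 0" using v by simp
    moreover have "b = 0" using e(1) \<open>a = 0\<close> by simp
    ultimately show "a = 0 \<and> b = 0" by simp
  next
    show "\<forall>x. tq (Vpoly v (-2 * v)) (pt3 (-1) 1 1) x = linf (pt3 (-2 * v) (-2 * v * \<i>) (-2 * v * (1 - \<i>))) x * linf (pt3 1 (-\<i>) (1+\<i>)) x"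
    proof
      fix x :: "complex^3"
      show "tq (Vpoly v (-2 * v)) (pt3 (-1) 1 1) x = linf (pt3 (-2 * v) (-2 * v * \<i>) (-2 * v * (1 - \<i>))) x * linf (pt3 1 (-\<i>) (1+\<i>)) x"
        unfolding tq_m linf3 pt3_nth by (simp add: algebra_simps power2_eq_square)
    qed
  qed
qed

lemma cusp_100:
  fixes v d :: complex
  assumes d: "d \<noteq> 0" and v: "v \<noteq> 0" and dv: "d^2 = v^2"
  shows "is_ordinary_cusp (Vpoly v d) (pt3 1 0 0)"
proof -
  define r where "r = csqrt d"
  define q where "q = v / d"
  have ed: "q * d = v" unfolding q_def using d by simp
  have "q^2 * d^2 = 1 * d^2" using ed dv by (metis mult_1 power_mult_distrib)
  then have e2: "q^2 = 1" using d by (metis mult_right_cancel power_not_zero)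
  have r2: "r^2 = d" unfolding r_def by simp
  have r0: "r \<noteq> 0" using r2 d by auto
  have sing: "singular_pt (Vpoly v d) (pt3 1 0 0)" using sing_char[OF d v] proj_eq_iff by (auto simp: pt3_nth)
  show ?thesis unfolding is_ordinary_cusp_def
  proof (rule conjI[OF sing], rule exI[of _ "pt3 0 r (r * q)"], intro conjI allI exI[of _ "pt3 0 v (-d)"])
    show "pt3 0 r (r * q) \<noteq> 0" using r0 unfolding vec3_nz pt3_nth by simp
  next
    fix x :: "complex^3"
    show "tq (Vpoly v d) (pt3 1 0 0) x = (linf (pt3 0 r (r * q)) x)^2"
      unfolding tq_100 linf3 pt3_nth using sq_aux[OF r2 ed e2, of "x$1" "x$2"] by simp
  next
    show "linf (pt3 0 r (r * q)) (pt3 0 v (- d)) = 0"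
      unfolding linf3 pt3_nth using ed by (simp add: algebra_simps)
  next
    have "tc (Vpoly v d) (pt3 1 0 0) (pt3 0 v (- d)) = 4 * v * d^3"
      unfolding tc_100 pt3_nth using dv by algebra
    then show "tc (Vpoly v d) (pt3 1 0 0) (pt3 0 v (- d)) \<noteq> 0" using d v by simp
  qed
qed

lemma cusp_010:
  fixes v d :: complex
  assumes d: "d \<noteq> 0" and v: "v \<noteq> 0" and dv: "d^2 = v^2"
  shows "is_ordinary_cusp (Vpoly v d) (pt3 0 1 0)"
proof -
  define r where "r = csqrt d"
  define q where "q = v / d"
  have ed: "q * d = v" unfolding q_def using d by simp
  have "q^2 * d^2 = 1 * d^2" using ed dv by (metis mult_1 power_mult_distrib)
  then have e2: "q^2 = 1" using d by (metis mult_right_cancel power_not_zero)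
  have r2: "r^2 = d" unfolding r_def by simp
  have r0: "r \<noteq> 0" using r2 d by auto
  have sing: "singular_pt (Vpoly v d) (pt3 0 1 0)" using sing_char[OF d v] proj_eq_iff by (auto simp: pt3_nth)
  show ?thesis unfolding is_ordinary_cusp_def
  proof (rule conjI[OF sing], rule exI[of _ "pt3 r 0 (-r * q)"], intro conjI allI exI[of _ "pt3 v 0 d"])
    show "pt3 r 0 (-r * q) \<noteq> 0" using r0 unfolding vec3_nz pt3_nth by simp
  next
    fix x :: "complex^3"
    show "tq (Vpoly v d) (pt3 0 1 0) x = (linf (pt3 r 0 (-r * q)) x)^2"
      unfolding tq_010 linf3 pt3_nth using sq_aux[OF r2 ed e2, of "x$0" "-x$2"] by (simp add: algebra_simps)
  next
    show "linf (pt3 r 0 (-r * q)) (pt3 v 0 d) = 0"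
      unfolding linf3 pt3_nth using ed by (simp add: algebra_simps)
  next
    have "tc (Vpoly v d) (pt3 0 1 0) (pt3 v 0 d) = 4 * v * d^3"
      unfolding tc_010 pt3_nth using dv by algebra
    then show "tc (Vpoly v d) (pt3 0 1 0) (pt3 v 0 d) \<noteq> 0" using d v by simp
  qed
qed



lemma poly_deg1: "degree (p::'a::zero poly) \<le> 1 \<Longrightarrow> p = [:coeff p 0, coeff p 1:]"
  by (rule poly_eqI) (auto simp: coeff_pCons coeff_eq_0 split: nat.splits)

lemma poly_deg2: "degree (p::'a::zero poly) \<le> 2 \<Longrightarrow> p = [:coeff p 0, coeff p 1, coeff p 2:]"
  by (rule poly_eqI) (auto simp: coeff_pCons coeff_eq_0 numeral_2_eq_2 split: nat.splits)

lemma root_low: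
  fixes a b v d :: complex
  assumes d: "d \<noteq> 0" and v: "v \<noteq> 0"
  shows "[:0,0,d:] + [:b,a:]*([:0,2 * v,-2 * v:] + [:b,a:]*([:d,0,d:] + [:b,a:]*([:-2 * v,2 * v:] + [:b,a:]*[:d:]))) \<noteq> 0"
proof
  assume "[:0,0,d:] + [:b,a:]*([:0,2 * v,-2 * v:] + [:b,a:]*([:d,0,d:] + [:b,a:]*([:-2 * v,2 * v:] + [:b,a:]*[:d:]))) = 0"
  then have c0: "d*b^2 + d*b^4 - 2 * v * b^3 = 0"
    and c1: "2 * v * b + 2*d*a*b + 2 * v * b^3 + 4*d*a*b^3 - 6 * v * a*b^2 = 0"
    and c2: "d + d*a^2 + d*b^2 + 2 * v * a + 6 * v * a*b^2 + 6*d*a^2*b^2 - 2 * v * b - 6 * v * a^2*b = 0"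
    and c3: "2*d*a*b + 6 * v * a^2*b + 4*d*a^3*b - 2 * v * a - 2 * v * a^3 = 0"
    and c4: "d*a^2 + d*a^4 + 2 * v * a^3 = 0"
    by (simp_all add: algebra_simps power2_eq_square power3_eq_cube power4_eq_xxxx)
  show False
  proof (cases "a = 0")
    case True
    have "2 * v * (b + b^3) = 0" using c1 True by algebra
    then have "b + b^3 = 0" using v by simp
    moreover have "d + d*b^2 - 2 * v * b = 0" using c2 True by simp
    ultimately show False using d v by algebra
  next
    case a: False
    have "a^2 * (d*a^2 + 2 * v * a + d) = 0" using c4 by algebra
    then have A: "d*a^2 + 2 * v * a + d = 0" using a by simp
    show False
    proof (cases "b = 0")
      case True
      have "-2 * v * a * (1 + a^2) = 0" using c3 True by algebra
      then have "1 + a^2 = 0" using a v by simp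
      then show False using A d v a by algebra
    next
      case b: False
      have "b^2 * (d*b^2 - 2 * v * b + d) = 0" using c0 by algebra
      then have B: "d*b^2 - 2 * v * b + d = 0" using b by simp
      show False using A B c1 c2 c3 a b d v by algebra
    qed
  qed
qed



lemma deg_le2: "degree [:x,y,z:] \<le> 2"
  by (rule degree_le) (auto simp: coeff_pCons split: nat.splits)
lemma deg_le1: "degree [:x,y:] \<le> 1"
  by (rule degree_le) (auto simp: coeff_pCons split: nat.splits)

lemma root_none:
  fixes r :: "complex poly" and v d :: complex
  assumes d: "d \<noteq> 0" and v: "v \<noteq> 0"
  shows "[:0,0,d:] + r*([:0,2 * v,-2 * v:] + r*([:d,0,d:] + r*([:-2 * v,2 * v:] + r*[:d:]))) \<noteq> 0"
proof (cases "degree r \<le> 1")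
  case True
  then have "r = [:coeff r 0, coeff r 1:]" by (rule poly_deg1)
  then show ?thesis using root_low[OF d v, of "coeff r 0" "coeff r 1"] by metis
next
  case False
  define m where "m = degree r"
  have m2: "m \<ge> 2" using False m_def by simp
  have r0: "r \<noteq> 0" using m2 m_def by auto
  define Q where "Q = [:0,0,d:] + r*[:0,2 * v,-2 * v:] + r^2*[:d,0,d:] + r^3*[:-2 * v,2 * v:]"
  have eq: "[:0,0,d:] + r*([:0,2 * v,-2 * v:] + r*([:d,0,d:] + r*([:-2 * v,2 * v:] + r*[:d:]))) = smult d (r^4) + Q"
    unfolding Q_def by (simp add: algebra_simps power2_eq_square power3_eq_cube power4_eq_xxxx)
  have dg4: "degree (smult d (r^4)) = 4*m" using d r0 m_def by (simp add: degree_power_eq)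
  have q1: "degree ([:0,0,d:]::complex poly) < 4*m" using m2 by simp
  have q2: "degree (r*[:0,2 * v,-2 * v:]) < 4*m"
    using degree_mult_le[of r "[:0,2 * v,-2 * v:]"] deg_le2[of 0 "2 * v" "-2 * v"] m2 m_def by linarith
  have q3: "degree (r^2*[:d,0,d:]) < 4*m"
    using degree_mult_le[of "r^2" "[:d,0,d:]"] deg_le2[of d 0 d] degree_power_le[of r 2] m2 m_def by linarith
  have q4: "degree (r^3*[:-2 * v,2 * v:]) < 4*m"
    using degree_mult_le[of "r^3" "[:-2 * v,2 * v:]"] deg_le1[of "-2 * v" "2 * v"] degree_power_le[of r 3] m2 m_def by linarith
  have "degree Q < 4*m" unfolding Q_def
    by (intro degree_add_less q1 q2 q3 q4)
  then have "degree (smult d (r^4) + Q) = 4*m" using dg4 by (simp add: degree_add_eq_left)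
  then show ?thesis unfolding eq using m2 by auto
qed



lemma quad_low:
  fixes p0 p1 p2 q0 q1 q2 a b v d :: complex
  assumes d: "d \<noteq> 0" and v: "v \<noteq> 0"
  and e0: "[:p0,p1,p2:] * [:q0,q1,q2:] = [:0,0,d:]"
  and e1: "[:p0,p1,p2:] * [:-2 * v - d*b, 2 * v - d*a:] + [:b,a:] * [:q0,q1,q2:] = [:0,2 * v,-2 * v:]"
  and e2: "smult d [:p0,p1,p2:] + [:b,a:] * [:-2 * v - d*b, 2 * v - d*a:] + [:q0,q1,q2:] = [:d,0,d:]"
  shows False
proof -
  from e0 have a0: "p0*q0 = 0" "p0*q1 + p1*q0 = 0" "p0*q2+p1*q1+p2*q0 = d" "p1*q2 + p2*q1 = 0" "p2*q2 = 0"
    by (simp_all add: algebra_simps)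
  from e1 have a1: "p0*(-2 * v - d*b) + b*q0 = 0"
     "p0*(2 * v - d*a) + p1*(-2 * v - d*b) + b*q1 + a*q0 = 2 * v"
     "p1*(2 * v - d*a) + p2*(-2 * v - d*b) + b*q2 + a*q1 = -2 * v"
     "p2*(2 * v - d*a) + a*q2 = 0"
    by (simp_all add: algebra_simps)
  from e2 have a2: "d*p0 + b*(-2 * v - d*b) + q0 = d"
     "d*p1 + b*(2 * v - d*a) + a*(-2 * v - d*b) + q1 = 0"
     "d*p2 + a*(2 * v - d*a) + q2 = d"
    by (simp_all add: algebra_simps)
  have cases: "(p0 = 0 \<and> p2 = 0 \<and> q0 = 0 \<and> q2 = 0 \<and> p1*q1 = d) \<or> (p0 = 0 \<and> p1 = 0 \<and> q1 = 0 \<and> q2 = 0 \<and> p2*q0 = d) \<or>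
      (p1 = 0 \<and> p2 = 0 \<and> q0 = 0 \<and> q1 = 0 \<and> p0*q2 = d)"
  proof -
    have "p0 = 0 \<or> q0 = 0" "p2 = 0 \<or> q2 = 0" using a0 by simp_all
    then show ?thesis
    proof (elim disjE)
      assume h: "p0 = 0" "p2 = 0"
      then have "p1 * q1 = d" "p1 * q0 = 0" "p1 * q2 = 0" using a0 by simp_all
      then show ?thesis using h d by auto
    next
      assume h: "p0 = 0" "q2 = 0"
      then have "p1 * q0 = 0" "p1*q1 + p2*q0 = d" "p2 * q1 = 0" using a0 by simp_all
      then show ?thesis using h d by auto
    next
      assume h: "q0 = 0" "p2 = 0"
      then have "p0 * q1 = 0" "p0*q2 + p1*q1 = d" "p1 * q2 = 0" using a0 by simp_all
      then show ?thesis using h d by auto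
    next
      assume h: "q0 = 0" "q2 = 0"
      then have "p0 * q1 = 0" "p1*q1 = d" "p2 * q1 = 0" using a0 by simp_all
      then show ?thesis using h d by auto
    qed
  qed
  then show False
  proof (elim disjE conjE)
    assume h: "p0 = 0" "p2 = 0" "q0 = 0" "q2 = 0" "p1*q1 = d"
    show False using a1 a2 h d v by algebra
  next
    assume h: "p0 = 0" "p1 = 0" "q1 = 0" "q2 = 0" "p2*q0 = d"
    show False using a1 a2 h d v by algebra
  next
    assume h: "p1 = 0" "p2 = 0" "q0 = 0" "q1 = 0" "p0*q2 = d"
    show False using a1 a2 h d v by algebra
  qed
qed


lemma degree_diff_right:
  fixes p q :: "'a::ab_group_add poly"
  assumes "degree p < degree q" shows "degree (p - q) = degree q"
proof -
  have "p - q = - (q + (- p))" by simp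
  moreover have "degree (q + (- p)) = degree q" using assms by (intro degree_add_eq_left) (simp add: degree_minus)
  ultimately show ?thesis by (simp only: degree_minus)
qed

lemma quad_none:
  fixes g0 g1 h0 h1 :: "complex poly" and v d :: complex
  assumes d: "d \<noteq> 0" and v: "v \<noteq> 0"
  and e0: "g0*h0 = [:0,0,d:]"
  and e1: "g0*h1 + g1*h0 = [:0,2 * v,-2 * v:]"
  and e2: "smult d g0 + g1*h1 + h0 = [:d,0,d:]"
  and e3: "smult d g1 + h1 = [:-2 * v,2 * v:]"
  shows False
proof -
  have h1: "h1 = [:-2 * v,2 * v:] - smult d g1" using e3 by (simp add: algebra_simps)
  have nz: "g0 \<noteq> 0" "h0 \<noteq> 0" using e0 d by auto
  have "degree (g0*h0) = 2" using e0 d by simp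
  then have dg: "degree g0 + degree h0 = 2" using degree_mult_eq[OF nz] by simp
  have dg1: "degree g1 \<le> 1"
  proof (rule ccontr)
    assume "\<not> degree g1 \<le> 1"
    then have m2: "degree g1 \<ge> 2" by simp
    then have g1nz: "g1 \<noteq> 0" by auto
    have A: "degree (g1*[:-2 * v,2 * v:]) < degree (smult d (g1*g1))"
      using degree_mult_le[of g1 "[:-2 * v,2 * v:]"] deg_le1[of "-2 * v" "2 * v"] m2
        degree_mult_eq[OF g1nz g1nz] d by simp
    have "g1*h1 = g1*[:-2 * v,2 * v:] - smult d (g1*g1)" unfolding h1 by (simp add: algebra_simps)
    then have "degree (g1*h1) = degree (smult d (g1*g1))"
      using degree_diff_right[OF A] by simp
    also have "\<dots> = 2 * degree g1" using degree_mult_eq[OF g1nz g1nz] d by simp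
    finally have X: "degree (g1*h1) = 2 * degree g1" .
    have "g1*h1 = [:d,0,d:] - smult d g0 - h0" using e2 by (simp add: algebra_simps)
    then have "degree (g1*h1) \<le> 2"
    proof -
      have "degree ([:d,0,d:] - smult d g0) \<le> 2"
        using deg_le2[of d 0 d] dg degree_smult_le[of d g0] by (intro degree_diff_le) auto
      then show ?thesis unfolding \<open>g1*h1 = [:d,0,d:] - smult d g0 - h0\<close> using dg by (intro degree_diff_le) auto
    qed
    then show False using X m2 by simp
  qed
  have r0: "g0 = [:coeff g0 0, coeff g0 1, coeff g0 2:]" using dg by (intro poly_deg2) simp
  have r1: "h0 = [:coeff h0 0, coeff h0 1, coeff h0 2:]" using dg by (intro poly_deg2) simp
  have r2: "g1 = [:coeff g1 0, coeff g1 1:]" using dg1 by (rule poly_deg1)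
  have h1': "h1 = [:-2 * v - d * coeff g1 0, 2 * v - d * coeff g1 1:]"
    unfolding h1 by (subst r2) simp
  show False
    apply (rule quad_low[OF d v, of "coeff g0 0" "coeff g0 1" "coeff g0 2" "coeff h0 0" "coeff h0 1" "coeff h0 2" "coeff g1 0" "coeff g1 1"])
    using e0 e1 e2 unfolding h1' by (simp_all only: r0[symmetric] r1[symmetric] r2[symmetric])
qed


definition Fexp :: "complex \<Rightarrow> complex \<Rightarrow> cpoly3" where
  "Fexp v d = [: [:0, 0, [:0,0,d:]:], [:0, [:0,0,2 * v:], [:0,-2 * v:]:], [:[:0,0,d:], 0, [:d:]:],
                 [:[:0,-2 * v:], [:2 * v:]:], [:[:d:]:] :]"

lemma Vpoly_Fexp: "Vpoly v d = Fexp v d"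
  unfolding Vpoly_def Xpoly_def Fexp_def cst3_def U0_def U1_def U2_def
  by (simp add: power2_eq_square algebra_simps)


definition psi :: "complex poly poly \<Rightarrow> complex poly" where
  "psi = map_poly (\<lambda>p. poly p 1)"
definition phi :: "cpoly3 \<Rightarrow> complex poly poly" where
  "phi = map_poly psi"

lemma psi_add: "psi (a + b) = psi a + psi b"
  unfolding psi_def by (rule map_poly_add_hom) (simp add: poly_add)
lemma psi_mult: "psi (a * b) = psi a * psi b"
  unfolding psi_def by (rule map_poly_mult_hom) (simp_all add: poly_add poly_mult)
lemma psi_0: "psi 0 = 0" unfolding psi_def by simp
lemma phi_mult: "phi (a * b) = phi a * phi b"
  unfolding phi_def by (rule map_poly_mult_hom) (simp_all add: psi_add psi_mult)

definition fexp :: "complex \<Rightarrow> complex \<Rightarrow> complex poly poly" where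
  "fexp v d = [: [:0,0,d:], [:0,2 * v,-2 * v:], [:d,0,d:], [:-2 * v,2 * v:], [:d:] :]"

lemma phi_Fexp: "phi (Fexp v d) = fexp v d"
  unfolding phi_def psi_def Fexp_def fexp_def
  by (simp add: map_poly_pCons)

lemma Fexp_degree: "d \<noteq> 0 \<Longrightarrow> degree (Fexp v d) = 4"
  unfolding Fexp_def by simp

lemma Fexp_lc: "d \<noteq> 0 \<Longrightarrow> lead_coeff (Fexp v d) = [:[:d:]:]"
  unfolding Fexp_def by simp

lemma const_factor:
  fixes x y :: "complex poly poly"
  assumes "x * y = [:[:d:]:]" "d \<noteq> 0"
  shows "\<exists>a. x = [:[:a:]:] \<and> a \<noteq> 0"
proof -
  have nz: "x \<noteq> 0" "y \<noteq> 0" using assms by auto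
  have "degree x + degree y = 0" using degree_mult_eq[OF nz] assms by simp
  then have "degree x = 0" "degree y = 0" by simp_all
  then obtain x0 y0 where xy: "x = [:x0:]" "y = [:y0:]" by (metis degree_eq_zeroE)
  then have "x0 * y0 = [:d:]" using assms by (simp add: mult.commute)
  moreover have nz0: "x0 \<noteq> 0" "y0 \<noteq> 0" using nz xy by auto
  ultimately have "degree x0 + degree y0 = 0" using degree_mult_eq[OF nz0] by simp
  then obtain a where "x0 = [:a:]" by (metis add_is_0 degree_eq_zeroE)
  then show ?thesis using xy nz0 by auto
qed


lemma no_lin:
  fixes g h :: "complex poly poly"
  assumes d: "d \<noteq> 0" and v: "v \<noteq> 0" and gh: "g * h = fexp v d"
  and dg: "degree g = 1" and lc: "lead_coeff g = [:a:]" and a: "a \<noteq> 0"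
  shows False
proof -
  have g: "g = [:coeff g 0, [:a:]:]" using poly_deg1[of g] dg lc by simp
  define r where "r = smult (-1/a) (coeff g 0)"
  have "poly g r = coeff g 0 + r * [:a:]" by (subst g) simp
  also have "\<dots> = 0" unfolding r_def using a by (simp add: mult.commute)
  finally have "poly (fexp v d) r = 0" unfolding gh[symmetric] by (simp add: poly_mult)
  then have "[:0,0,d:] + r*([:0,2 * v,-2 * v:] + r*([:d,0,d:] + r*([:-2 * v,2 * v:] + r*[:d:]))) = 0"
    unfolding fexp_def by simp
  then show False using root_none[OF d v] by blast
qed

lemma no_quad:
  fixes g h :: "complex poly poly"
  assumes d: "d \<noteq> 0" and v: "v \<noteq> 0" and gh: "g * h = fexp v d"
  and dg: "degree g = 2" and lc: "lead_coeff g = [:a:]" and a: "a \<noteq> 0"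
  and dh: "degree h = 2" and lch: "lead_coeff h = [:b:]"
  shows False
proof -
  have g: "g = [:coeff g 0, coeff g 1, [:a:]:]" using poly_deg2[of g] dg lc by simp
  have h: "h = [:coeff h 0, coeff h 1, [:b:]:]" using poly_deg2[of h] dh lch by simp
  have "[:coeff g 0, coeff g 1, [:a:]:] * [:coeff h 0, coeff h 1, [:b:]:] = fexp v d"
    using gh g h by simp
  then have E: "coeff g 0 * coeff h 0 = [:0, 0, d:]"
     "coeff g 0 * coeff h 1 + coeff h 0 * coeff g 1 = [:0, 2 * v, -2 * v:]"
     "smult a (coeff h 0) + smult b (coeff g 0) + coeff g 1 * coeff h 1 = [:d, 0, d:]"
     "smult a (coeff h 1) + smult b (coeff g 1) = [:-2 * v, 2 * v:]"
     "a * b = d"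
    unfolding fexp_def by (simp_all add: algebra_simps)
  have b: "b = d / a" using E(5) a by (simp add: field_simps)
  show False
  proof (rule quad_none[OF d v, of "smult (1/a) (coeff g 0)" "smult a (coeff h 0)" "smult a (coeff h 1)" "smult (1/a) (coeff g 1)"])
    show "smult (1/a) (coeff g 0) * smult a (coeff h 0) = [:0,0,d:]"
      using E(1) a by simp
    show "smult (1/a) (coeff g 0) * smult a (coeff h 1) + smult (1/a) (coeff g 1) * smult a (coeff h 0) = [:0,2 * v,-2 * v:]"
      using E(2) a by (simp add: algebra_simps)
    show "smult d (smult (1/a) (coeff g 0)) + smult (1/a) (coeff g 1) * smult a (coeff h 1) + smult a (coeff h 0) = [:d,0,d:]"
      using E(3) a unfolding b by (simp add: algebra_simps)
    show "smult d (smult (1/a) (coeff g 1)) + smult a (coeff h 1) = [:-2 * v,2 * v:]"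
      using E(4) a unfolding b by (simp add: algebra_simps)
  qed
qed


lemma unit3:
  fixes G :: cpoly3
  assumes "degree G = 0" "lead_coeff G = [:[:a:]:]" "a \<noteq> 0"
  shows "G dvd 1"
proof -
  have "G = [:[:[:a:]:]:]" using assms(1,2) by (metis degree_0_id)
  moreover have "a dvd 1" using assms(3) by (simp add: dvd_field_iff)
  ultimately show ?thesis by (simp add: is_unit_const_poly_iff)
qed

lemma phi_deg_lc:
  fixes G :: cpoly3
  assumes "lead_coeff G = [:[:a:]:]" "a \<noteq> 0"
  shows "degree (phi G) = degree G" "lead_coeff (phi G) = [:a:]"
proof -
  have ps: "psi (lead_coeff G) = [:a:]" using assms unfolding psi_def by (simp add: map_poly_pCons)
  show "degree (phi G) = degree G" unfolding phi_def
    by (rule map_poly_degree_eq) (use ps assms in simp)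
  show "lead_coeff (phi G) = [:a:]" unfolding phi_def
    using lead_coeff_map_poly_nz[of psi G] ps assms psi_0 by simp
qed

lemma irred_V:
  fixes v d :: complex
  assumes d: "d \<noteq> 0" and v: "v \<noteq> 0"
  shows "irreducible (Vpoly v d)"
  unfolding Vpoly_Fexp
proof (rule irreducibleI)
  have deg: "degree (Fexp v d) = 4" using Fexp_degree[OF d] .
  then show "Fexp v d \<noteq> 0" by auto
  show "\<not> Fexp v d dvd 1" using deg by (auto simp: is_unit_poly_iff)
  fix G H assume FGH: "Fexp v d = G * H"
  have nz: "G \<noteq> 0" "H \<noteq> 0" using FGH deg by auto
  have dsum: "degree G + degree H = 4" using degree_mult_eq[OF nz] FGH deg by simp
  have "lead_coeff G * lead_coeff H = [:[:d:]:]" using FGH Fexp_lc[OF d, of v] by (simp add: lead_coeff_mult)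
  then obtain a b where a: "lead_coeff G = [:[:a:]:]" "a \<noteq> 0" and b: "lead_coeff H = [:[:b:]:]" "b \<noteq> 0"
    using const_factor[OF _ d] by (metis mult.commute)
  have fgh: "phi G * phi H = fexp v d" using FGH phi_Fexp phi_mult by metis
  have dG: "degree (phi G) = degree G" "lead_coeff (phi G) = [:a:]" using phi_deg_lc[OF a] by auto
  have dH: "degree (phi H) = degree H" "lead_coeff (phi H) = [:b:]" using phi_deg_lc[OF b] by auto
  consider "degree G = 0" | "degree H = 0" | "degree G = 1" | "degree H = 1" | "degree G = 2 \<and> degree H = 2"
    using dsum by linarith
  then show "G dvd 1 \<or> H dvd 1"
  proof cases
    case 1 then show ?thesis using unit3[OF _ a] by blast
  next
    case 2 then show ?thesis using unit3[OF _ b] by blast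
  next
    case 3 then show ?thesis using no_lin[OF d v fgh _ dG(2) a(2)] dG(1) by simp
  next
    case 4 then show ?thesis using no_lin[OF d v _ _ dH(2) b(2), of "phi G"] fgh dH(1) by (simp add: mult.commute)
  next
    case 5 then show ?thesis using no_quad[OF d v fgh _ dG(2) a(2) _ dH(2)] dG(1) dH(1) by simp
  qed
qed


theorem lemma7p2:
  fixes v d :: complex
  assumes "d \<noteq> 0" and "v \<noteq> 0"
  shows
   "(d \<noteq> 2 * v \<and> d \<noteq> -2 * v \<longrightarrow>
       (\<forall>p. singular_pt (Vpoly v d) p \<longleftrightarrow> proj_eq p (pt3 1 0 0) \<or> proj_eq p (pt3 0 1 0)) \<and>
       irreducible (Vpoly v d) \<and>
       (d^2 \<noteq> v^2 \<longrightarrow> is_node (Vpoly v d) (pt3 1 0 0) \<and> is_node (Vpoly v d) (pt3 0 1 0)) \<and>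
       (d^2 = v^2 \<longrightarrow> is_ordinary_cusp (Vpoly v d) (pt3 1 0 0) \<and>
                      is_ordinary_cusp (Vpoly v d) (pt3 0 1 0))) \<and>
    (d = 2 * v \<longrightarrow>
       irreducible (Vpoly v d) \<and>
       (\<forall>p. singular_pt (Vpoly v d) p \<longleftrightarrow>
              proj_eq p (pt3 1 0 0) \<or> proj_eq p (pt3 0 1 0) \<or> proj_eq p (pt3 1 (-1) 1)) \<and>
       is_node (Vpoly v d) (pt3 1 (-1) 1)) \<and>
    (d = -2 * v \<longrightarrow>
       irreducible (Vpoly v d) \<and>
       (\<forall>p. singular_pt (Vpoly v d) p \<longleftrightarrow>
              proj_eq p (pt3 1 0 0) \<or> proj_eq p (pt3 0 1 0) \<or> proj_eq p (pt3 (-1) 1 1)) \<and>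
       is_node (Vpoly v d) (pt3 (-1) 1 1))"
  proof (intro conjI impI)
  assume h: "d \<noteq> 2 * v \<and> d \<noteq> -2 * v"
  show "\<forall>p. singular_pt (Vpoly v d) p \<longleftrightarrow> proj_eq p (pt3 1 0 0) \<or> proj_eq p (pt3 0 1 0)"
    using sing_char[OF assms] h by blast
  show "irreducible (Vpoly v d)" by (rule irred_V[OF assms])
  assume "d^2 \<noteq> v^2"
  then show "is_node (Vpoly v d) (pt3 1 0 0)" "is_node (Vpoly v d) (pt3 0 1 0)"
    using node_100[OF assms] node_010[OF assms] by auto
next
  assume "d^2 = v^2"
  then show "is_ordinary_cusp (Vpoly v d) (pt3 1 0 0)" "is_ordinary_cusp (Vpoly v d) (pt3 0 1 0)"
    using cusp_100[OF assms] cusp_010[OF assms] by auto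
next
  assume h: "d = 2 * v"
  show "irreducible (Vpoly v d)" by (rule irred_V[OF assms])
  have "d \<noteq> -2 * v" using h assms by auto
  then show "\<forall>p. singular_pt (Vpoly v d) p \<longleftrightarrow>
              proj_eq p (pt3 1 0 0) \<or> proj_eq p (pt3 0 1 0) \<or> proj_eq p (pt3 1 (-1) 1)"
    using sing_char[OF assms] h by blast
  show "is_node (Vpoly v d) (pt3 1 (-1) 1)" using node_p[OF assms(2)] h by simp
next
  assume h: "d = -2 * v"
  show "irreducible (Vpoly v d)" by (rule irred_V[OF assms])
  have "d \<noteq> 2 * v" using h assms by auto
  then show "\<forall>p. singular_pt (Vpoly v d) p \<longleftrightarrow>
              proj_eq p (pt3 1 0 0) \<or> proj_eq p (pt3 0 1 0) \<or> proj_eq p (pt3 (-1) 1 1)"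
    using sing_char[OF assms] h by blast
  show "is_node (Vpoly v d) (pt3 (-1) 1 1)" using node_m[OF assms(2)] h by simp
qed

end
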